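(* Consider the $2$-peakon dynamical system on the $6$-dimensional phase space with coordinates $(a_1,a_2,b_1,b_2,q_1,q_2)$, with Hamiltonian $h=2(a_1+a_2+b_1+b_2)$ and Poisson bracket defined, for $j,k\in\{1,2\}$, by $$\{a_j,a_k\}=2a_ja_k\,\mathrm{sgn}(q_j-q_k)e^{-|q_j-q_k|},\quad \{b_j,b_k\}=\tfrac12 b_jb_k\,\mathrm{sgn}(q_j-q_k)e^{-|q_j-q_k|},$$ $$\{q_j,q_k\}=\tfrac12\mathrm{sgn}(q_j-q_k)\big(1-e^{-|q_j-q_k|}\big),\quad \{q_j,a_k\}=a_ke^{-|q_j-q_k|},\quad \{q_j,b_k\}=\tfrac12 b_ke^{-|q_j-q_k|},$$ $$\{a_j,b_k\}=a_jb_k\,\mathrm{sgn}(q_j-q_k)e^{-|q_j-q_k|}$$ (remaining brackets by antisymmetry). Then the function $J=b_1b_2\big(1-e^{-|q_1-q_2|}\big)$ is independent of $h$ and the Casimirs $\mathcal C_j=a_j/b_j^2$, and satisfies $\{J,h\}=0$; consequently this $2$-peakon system is completely integrable in the Liouville sense.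
   Context: This system describes $2$-peakon solutions $u=\sum_{j=1}^2 a_je^{-|x-q_j|}$, $v=\sum_{j=1}^2 b_je^{-|x-q_j|}$ of the Popowicz system $m_t+m_x(2u+v)+3m(2u_x+v_x)=0$, $n_t+n_x(2u+v)+2n(2u_x+v_x)=0$, $m=u-u_{xx}$, $n=v-v_{xx}$. Convention: $\mathrm{sgn}(0)=0$. The bracket is extended to functions by bilinearity, antisymmetry and the Leibniz rule; $\mathcal C_1,\mathcal C_2$ are Casimirs (Poisson-commute with every function), so the motion is on $4$-dimensional symplectic leaves. *)

theory Defs
  imports "HOL-Analysis.Analysis"
begin

datatype pk = P1 | P2
datatype coord = A pk | B pk | Q pk

lemma UNIV_pk: "(UNIV :: pk set) = {P1, P2}"
  using pk.exhaust by auto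

lemma UNIV_coord: "(UNIV :: coord set) = {A P1, A P2, B P1, B P2, Q P1, Q P2}"
proof -
  have "c \<in> {A P1, A P2, B P1, B P2, Q P1, Q P2}" for c :: coord
    by (cases c; metis UNIV_pk insertE empty_iff insert_iff UNIV_I)
  then show ?thesis by auto
qed

instance coord :: finite
  by standard (simp add: UNIV_coord)

type_synonym phase = "real ^ coord"

definition aa :: "phase \<Rightarrow> pk \<Rightarrow> real" where "aa x j = x $ A j"
definition bb :: "phase \<Rightarrow> pk \<Rightarrow> real" where "bb x j = x $ B j"
definition qq :: "phase \<Rightarrow> pk \<Rightarrow> real" where "qq x j = x $ Q j"

text \<open>e^{-|q_j-q_k|} and sgn(q_j-q_k) (with sgn 0 = 0, as for Isabelle's sgn).\<close>
definition EE :: "phase \<Rightarrow> pk \<Rightarrow> pk \<Rightarrow> real" where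
  "EE x j k = exp (- \<bar>qq x j - qq x k\<bar>)"
definition SS :: "phase \<Rightarrow> pk \<Rightarrow> pk \<Rightarrow> real" where
  "SS x j k = sgn (qq x j - qq x k)"

fun PB :: "phase \<Rightarrow> coord \<Rightarrow> coord \<Rightarrow> real" where
  "PB x (A j) (A k) = 2 * aa x j * aa x k * SS x j k * EE x j k"
| "PB x (B j) (B k) = 1/2 * bb x j * bb x k * SS x j k * EE x j k"
| "PB x (Q j) (Q k) = 1/2 * SS x j k * (1 - EE x j k)"
| "PB x (Q j) (A k) = aa x k * EE x j k"
| "PB x (A k) (Q j) = - (aa x k * EE x j k)"
| "PB x (Q j) (B k) = 1/2 * bb x k * EE x j k"
| "PB x (B k) (Q j) = - (1/2 * bb x k * EE x j k)"
| "PB x (A j) (B k) = aa x j * bb x k * SS x j k * EE x j k"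
| "PB x (B k) (A j) = - (aa x j * bb x k * SS x j k * EE x j k)"

definition pd :: "(phase \<Rightarrow> real) \<Rightarrow> coord \<Rightarrow> phase \<Rightarrow> real" where
  "pd F c x = frechet_derivative F (at x) (axis c 1)"

text \<open>Poisson bracket of functions (bilinearity + Leibniz rule).\<close>
definition poisson :: "(phase \<Rightarrow> real) \<Rightarrow> (phase \<Rightarrow> real) \<Rightarrow> phase \<Rightarrow> real" where
  "poisson F G x = (\<Sum>c\<in>UNIV. \<Sum>d\<in>UNIV. pd F c x * PB x c d * pd G d x)"

definition ham :: "phase \<Rightarrow> real" where
  "ham x = 2 * (aa x P1 + aa x P2 + bb x P1 + bb x P2)"

definition Jfun :: "phase \<Rightarrow> real" where
  "Jfun x = bb x P1 * bb x P2 * (1 - exp (- \<bar>qq x P1 - qq x P2\<bar>))"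

definition Cas :: "pk \<Rightarrow> phase \<Rightarrow> real" where
  "Cas j x = aa x j / (bb x j)\<^sup>2"

definition indep_diff4 :: "(phase \<Rightarrow> real) \<Rightarrow> (phase \<Rightarrow> real) \<Rightarrow> (phase \<Rightarrow> real)
    \<Rightarrow> (phase \<Rightarrow> real) \<Rightarrow> phase \<Rightarrow> bool" where
  "indep_diff4 F1 F2 F3 F4 x \<longleftrightarrow>
     F1 differentiable (at x) \<and> F2 differentiable (at x) \<and>
     F3 differentiable (at x) \<and> F4 differentiable (at x) \<and>
     (\<forall>c1 c2 c3 c4 :: real.
        (\<forall>v. c1 * frechet_derivative F1 (at x) v + c2 * frechet_derivative F2 (at x) v
            + c3 * frechet_derivative F3 (at x) v + c4 * frechet_derivative F4 (at x) v = 0)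
        \<longrightarrow> c1 = 0 \<and> c2 = 0 \<and> c3 = 0 \<and> c4 = 0)"

text \<open>Natural domain: Casimirs need b_j nonzero, J is smooth only off q1 = q2.\<close>
definition Dom :: "phase set" where
  "Dom = {x. bb x P1 \<noteq> 0 \<and> bb x P2 \<noteq> 0 \<and> qq x P1 \<noteq> qq x P2}"

end

theory Submission imports Defs begin

definition LJ :: "phase \<Rightarrow> phase \<Rightarrow> real" where
 "LJ x v = bb x P2 * (1 - EE x P1 P2) * v$B P1 + bb x P1 * (1 - EE x P1 P2) * v$B P2
    + bb x P1 * bb x P2 * EE x P1 P2 * SS x P1 P2 * (v$Q P1 - v$Q P2)"

lemma J_deriv:
  assumes "qq x P1 \<noteq> qq x P2"
  shows "(Jfun has_derivative LJ x) (at x)"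
proof -
  define s where "s = sgn (qq x P1 - qq x P2)"
  define g where "g y = y$B P1 * y$B P2 * (1 - exp (-(s*(y$Q P1 - y$Q P2))))" for y :: phase
  have s2: "s * s = 1" "\<bar>qq x P1 - qq x P2\<bar> = s * (qq x P1 - qq x P2)" using assms
    by (auto simp: s_def sgn_if)
  have "(g has_derivative (\<lambda>v. v$B P1 * x$B P2 * (1 - exp (-(s*(x$Q P1 - x$Q P2))))
      + x$B P1 * v$B P2 * (1 - exp (-(s*(x$Q P1 - x$Q P2))))
      + x$B P1 * x$B P2 * (exp (-(s*(x$Q P1 - x$Q P2))) * (s*(v$Q P1 - v$Q P2))))) (at x)"
    unfolding g_def
    by (rule has_derivative_eq_rhs, (rule derivative_intros bounded_linear.has_derivative[OF bounded_linear_vec_nth])+, auto simp: algebra_simps)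
  then have "(g has_derivative LJ x) (at x)"
  proof (rule has_derivative_eq_rhs, intro ext)
    fix v :: phase
    have e1: "\<bar>x$Q P1 - x$Q P2\<bar> = s * (x$Q P1 - x$Q P2)" "sgn (x$Q P1 - x$Q P2) = s"
      using s2 by (auto simp: qq_def s_def)
    show "v$B P1 * x$B P2 * (1 - exp (-(s*(x$Q P1 - x$Q P2))))
      + x$B P1 * v$B P2 * (1 - exp (-(s*(x$Q P1 - x$Q P2))))
      + x$B P1 * x$B P2 * (exp (-(s*(x$Q P1 - x$Q P2))) * (s*(v$Q P1 - v$Q P2))) = LJ x v"
      unfolding LJ_def EE_def SS_def bb_def qq_def e1 by (simp add: algebra_simps)
  qed
  moreover have "open {y::phase. 0 < s * (y$Q P1 - y$Q P2)}"
    by (rule open_Collect_less; intro continuous_intros)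
  moreover have "x \<in> {y::phase. 0 < s * (y$Q P1 - y$Q P2)}" using assms
    by (auto simp: s_def sgn_if qq_def)
  moreover have "g y = Jfun y" if "y \<in> {y::phase. 0 < s * (y$Q P1 - y$Q P2)}" for y
  proof -
    have "\<bar>y$Q P1 - y$Q P2\<bar> = s*(y$Q P1 - y$Q P2)" using that assms
      by (auto simp: s_def sgn_if abs_if qq_def split: if_splits)
    then show ?thesis by (simp add: g_def Jfun_def bb_def qq_def)
  qed
  ultimately show ?thesis by (rule has_derivative_transform_within_open)
qed

definition LH :: "phase \<Rightarrow> real" where
 "LH v = 2 * (v$A P1 + v$A P2 + v$B P1 + v$B P2)"

lemma H_deriv: "(ham has_derivative LH) (at x)"
  unfolding ham_def aa_def bb_def LH_def
  by (rule has_derivative_eq_rhs, (rule derivative_intros bounded_linear.has_derivative[OF bounded_linear_vec_nth])+, auto)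

definition LC :: "pk \<Rightarrow> phase \<Rightarrow> phase \<Rightarrow> real" where
 "LC j x v = v$A j / (bb x j)^2 - 2 * aa x j * v$B j / (bb x j)^3"

lemma C_deriv: assumes "bb x j \<noteq> 0" shows "(Cas j has_derivative LC j x) (at x)"
proof -
  have d1: "((\<lambda>y::phase. y$A j) has_derivative (\<lambda>v. v$A j)) (at x)"
    by (rule bounded_linear.has_derivative[OF bounded_linear_vec_nth]) (rule has_derivative_ident)
  have d2: "((\<lambda>y::phase. y$B j) has_derivative (\<lambda>v. v$B j)) (at x)"
    by (rule bounded_linear.has_derivative[OF bounded_linear_vec_nth]) (rule has_derivative_ident)
  have b: "x$B j \<noteq> 0" using assms by (simp add: bb_def)
  show ?thesis
    unfolding Cas_def aa_def bb_def
    apply (rule has_derivative_eq_rhs[OF has_derivative_divide[OF d1 has_derivative_power[OF d2]]])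
    using b apply simp
    using b apply (auto simp: LC_def bb_def aa_def field_simps power2_eq_square power3_eq_cube intro!: ext)
    done
qed

lemma EE_simps: "EE x j j = 1" "EE x P2 P1 = EE x P1 P2"
  by (auto simp: EE_def abs_minus_commute)
lemma SS_simps: "SS x j j = 0" "SS x P2 P1 = - SS x P1 P2"
  by (auto simp: SS_def sgn_minus[symmetric])

lemma sum_coord: "(\<Sum>c\<in>UNIV. f c) = f (A P1) + f (A P2) + f (B P1) + f (B P2) + f (Q P1) + f (Q P2)"
  for f :: "coord \<Rightarrow> real"
  by (simp add: UNIV_coord)

lemma part1: assumes "qq x P1 \<noteq> qq x P2" shows "poisson Jfun ham x = 0"
proof -
  have pJ: "pd Jfun c x = LJ x (axis c 1)" for c
    unfolding pd_def using frechet_derivative_at[OF J_deriv[OF assms]] by simp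
  have pH: "pd ham c x = LH (axis c 1)" for c
    unfolding pd_def using frechet_derivative_at[OF H_deriv] by simp
  show ?thesis
    unfolding poisson_def pJ pH sum_coord
    by (simp add: LJ_def LH_def axis_def EE_simps SS_simps algebra_simps field_simps)
qed

lemma indep_iff:
  assumes x: "x \<in> Dom"
  shows "indep_diff4 Jfun ham (Cas P1) (Cas P2) x \<longleftrightarrow> (bb x P1 + 2*aa x P1 \<noteq> 0 \<or> bb x P2 + 2*aa x P2 \<noteq> 0)"
proof -
  have b1: "bb x P1 \<noteq> 0" and b2: "bb x P2 \<noteq> 0" and q: "qq x P1 \<noteq> qq x P2"
    using x by (auto simp: Dom_def)
  note dJ = J_deriv[OF q] and dH = H_deriv[of x] and dC1 = C_deriv[OF b1] and dC2 = C_deriv[OF b2]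
  have fr: "frechet_derivative Jfun (at x) = LJ x" "frechet_derivative ham (at x) = LH"
     "frechet_derivative (Cas P1) (at x) = LC P1 x" "frechet_derivative (Cas P2) (at x) = LC P2 x"
    using frechet_derivative_at[OF dJ] frechet_derivative_at[OF dH]
      frechet_derivative_at[OF dC1] frechet_derivative_at[OF dC2] by auto
  have dif: "Jfun differentiable (at x)" "ham differentiable (at x)"
     "Cas P1 differentiable (at x)" "Cas P2 differentiable (at x)"
    using dJ dH dC1 dC2 by (auto intro: differentiableI)
  have E: "EE x P1 P2 > 0" "EE x P1 P2 < 1" using q by (auto simp: EE_def)
  have S: "SS x P1 P2 \<noteq> 0" using q by (auto simp: SS_def sgn_if split: if_splits)
  show ?thesis
  proof
    assume ind: "indep_diff4 Jfun ham (Cas P1) (Cas P2) x"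
    show "bb x P1 + 2*aa x P1 \<noteq> 0 \<or> bb x P2 + 2*aa x P2 \<noteq> 0"
    proof (rule ccontr)
      assume "\<not> ?thesis"
      then have h1: "bb x P1 = -2*aa x P1" and h2: "bb x P2 = -2*aa x P2" by auto
      have "\<forall>v. 0 * LJ x v + 1 * LH v + (-2*(bb x P1)^2) * LC P1 x v + (-2*(bb x P2)^2) * LC P2 x v = 0"
      proof
        fix v :: phase
        have "(bb x P1)^2 * LC P1 x v = v$A P1 - 2 * aa x P1 * v$B P1 / bb x P1"
          using b1 by (simp add: LC_def field_simps power2_eq_square power3_eq_cube)
        also have "\<dots> = v$A P1 + v$B P1" using b1 h1 by (simp add: field_simps)
        finally have c1: "(bb x P1)^2 * LC P1 x v = v$A P1 + v$B P1" .
        have "(bb x P2)^2 * LC P2 x v = v$A P2 - 2 * aa x P2 * v$B P2 / bb x P2"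
          using b2 by (simp add: LC_def field_simps power2_eq_square power3_eq_cube)
        also have "\<dots> = v$A P2 + v$B P2" using b2 h2 by (simp add: field_simps)
        finally have c2: "(bb x P2)^2 * LC P2 x v = v$A P2 + v$B P2" .
        show "0 * LJ x v + 1 * LH v + (-2*(bb x P1)^2) * LC P1 x v + (-2*(bb x P2)^2) * LC P2 x v = 0"
          using c1 c2 by (simp add: LH_def algebra_simps)
      qed
      then show False using ind unfolding indep_diff4_def fr by fastforce
    qed
  next
    assume cond: "bb x P1 + 2*aa x P1 \<noteq> 0 \<or> bb x P2 + 2*aa x P2 \<noteq> 0"
    show "indep_diff4 Jfun ham (Cas P1) (Cas P2) x"
      unfolding indep_diff4_def fr
    proof (intro conjI dif, intro allI impI)
      fix c1 c2 c3 c4 :: real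
      assume h: "\<forall>v. c1 * LJ x v + c2 * LH v + c3 * LC P1 x v + c4 * LC P2 x v = 0"
      have "c1 * (bb x P1 * bb x P2 * EE x P1 P2 * SS x P1 P2) = 0"
        using h[rule_format, of "axis (Q P1) 1"] by (simp add: LJ_def LH_def LC_def axis_def)
      then have z1: "c1 = 0" using b1 b2 E S by simp
      have eA1: "2*c2 + c3 / (bb x P1)^2 = 0"
        using h[rule_format, of "axis (A P1) 1"] by (simp add: LJ_def LH_def LC_def axis_def)
      have eA2: "2*c2 + c4 / (bb x P2)^2 = 0"
        using h[rule_format, of "axis (A P2) 1"] by (simp add: LJ_def LH_def LC_def axis_def)
      have eB1: "2*c2 - c3 * (2 * aa x P1 / (bb x P1)^3) = 0"
        using h[rule_format, of "axis (B P1) 1"] z1 by (simp add: LJ_def LH_def LC_def axis_def)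
      have eB2: "2*c2 - c4 * (2 * aa x P2 / (bb x P2)^3) = 0"
        using h[rule_format, of "axis (B P2) 1"] z1 by (simp add: LJ_def LH_def LC_def axis_def)
      have c3: "c3 = -2*c2*(bb x P1)^2" using eA1 b1 by (simp add: field_simps)
      have c4: "c4 = -2*c2*(bb x P2)^2" using eA2 b2 by (simp add: field_simps)
      have "2*c2 + 4*c2*aa x P1 / bb x P1 = 0"
        using eB1 b1 unfolding c3 by (simp add: field_simps power2_eq_square power3_eq_cube)
      then have k1: "c2 * (bb x P1 + 2*aa x P1) = 0" using b1 by (simp add: field_simps)
      have "2*c2 + 4*c2*aa x P2 / bb x P2 = 0"
        using eB2 b2 unfolding c4 by (simp add: field_simps power2_eq_square power3_eq_cube)
      then have k2: "c2 * (bb x P2 + 2*aa x P2) = 0" using b2 by (simp add: field_simps)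
      have z2: "c2 = 0" using k1 k2 cond by auto
      show "c1 = 0 \<and> c2 = 0 \<and> c3 = 0 \<and> c4 = 0" using z1 z2 c3 c4 by simp
    qed
  qed
qed

lemma setEq: "{x \<in> Dom. indep_diff4 Jfun ham (Cas P1) (Cas P2) x} =
  {x. x$B P1 \<noteq> 0 \<and> x$B P2 \<noteq> 0 \<and> x$Q P1 \<noteq> x$Q P2 \<and>
      (x$B P1 + 2*x$A P1 \<noteq> 0 \<or> x$B P2 + 2*x$A P2 \<noteq> 0)}"
  using indep_iff by (auto simp: Dom_def aa_def bb_def qq_def)

theorem mainTheorem2:
  shows "(\<forall>x. qq x P1 \<noteq> qq x P2 \<longrightarrow> poisson Jfun ham x = 0)
       \<and> open {x \<in> Dom. indep_diff4 Jfun ham (Cas P1) (Cas P2) x}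
       \<and> Dom \<subseteq> closure {x \<in> Dom. indep_diff4 Jfun ham (Cas P1) (Cas P2) x}"
proof (intro conjI allI impI)
  show "poisson Jfun ham x = 0" if "qq x P1 \<noteq> qq x P2" for x using part1 that by blast
  show "open {x \<in> Dom. indep_diff4 Jfun ham (Cas P1) (Cas P2) x}"
    unfolding setEq
    by (intro open_Collect_conj open_Collect_disj open_Collect_neq continuous_intros)
  show "Dom \<subseteq> closure {x \<in> Dom. indep_diff4 Jfun ham (Cas P1) (Cas P2) x}"
  proof
    fix x assume x: "x \<in> Dom"
    show "x \<in> closure {x \<in> Dom. indep_diff4 Jfun ham (Cas P1) (Cas P2) x}"
      unfolding setEq closure_approachable
    proof (intro allI impI)
      fix e :: real assume e: "e > 0"
      show "\<exists>y\<in>{x. x$B P1 \<noteq> 0 \<and> x$B P2 \<noteq> 0 \<and> x$Q P1 \<noteq> x$Q P2 \<and>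
      (x$B P1 + 2*x$A P1 \<noteq> 0 \<or> x$B P2 + 2*x$A P2 \<noteq> 0)}. dist y x < e"
      proof (cases "x$B P1 + 2*x$A P1 \<noteq> 0 \<or> x$B P2 + 2*x$A P2 \<noteq> 0")
        case True
        then show ?thesis using x e by (intro bexI[of _ x]) (auto simp: Dom_def bb_def qq_def)
      next
        case False
        define y where "y = x + (e/2) *\<^sub>R axis (A P1) 1"
        have "dist y x = e/2" using e by (simp add: y_def dist_norm)
        moreover have "y$B P1 + 2*y$A P1 \<noteq> 0" using False e by (simp add: y_def axis_def)
        ultimately show ?thesis using x e
          by (intro bexI[of _ y]) (auto simp: Dom_def bb_def qq_def y_def axis_def)
      qed
    qed
  qed
qed

end
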